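(* Let $E$ be a finite set and $\mathcal{W}\subseteq\{+,-,0\}^E$. Then $\mathcal{W}$ is an affine oriented matroid if and only if $\mathcal{W}$ satisfies: (A1') if $X,Y\in\mathcal{W}$ then $X\circ(-Y)\in\mathcal{W}$; (A2') if $X,Y\in\mathcal{W}$ with $S(X,Y)\neq\emptyset$, then $I'_e(X,Y)\cap\mathcal{W}\neq\emptyset$ for all $e\in S(X,Y)$; (A3') $\mathcal{Q}(\mathcal{W})\circ\mathcal{W}\subseteq\mathcal{W}$.
   Context: For $X\in\{+,-,0\}^E$: $X^+=\{e:X_e=+\}$, $X^-=\{e:X_e=-\}$, support $\underline{X}=X^+\cup X^-$; $(-X)_e=-X_e$; composition $(X\circ Y)_e=X_e$ if $X_e\neq0$, else $Y_e$; $S(X,Y)=(X^+\cap Y^-)\cup(X^-\cap Y^+)$; $\mathcal{A}\circ\mathcal{B}=\{A\circ B: A\in\mathcal{A}, B\in\mathcal{B}\}$. Sum: $(X+Y)_e=0$ if $e\in S(X,Y)$, else $(X\circ Y)_e$. An oriented matroid on $F$ is $\mathcal{O}\subseteq\{+,-,0\}^F$ with: (O1) zero vector in $\mathcal{O}$; (O2) $X\in\mathcal{O}\Rightarrow -X\in\mathcal{O}$; (O3) $X,Y\in\mathcal{O}\Rightarrow X\circ Y\in\mathcal{O}$; (O4) if $X,Y\in\mathcal{O}$, $\underline{X}=\underline{Y}$, $e\in S(X,Y)$, there is $Z\in\mathcal{O}$ with $Z_e=0$ and $Z_f=(X\circ Y)_f=(Y\circ X)_f$ for all $f\notin S(X,Y)$.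 $\mathcal{W}\subseteq\{+,-,0\}^E$ is an affine oriented matroid if there exist $g\notin E$ and an oriented matroid $\mathcal{O}$ on $E\cup\{g\}$ with $\mathcal{W}=\{X|_E: X\in\mathcal{O}, X_g=+\}$. For arbitrary $X,Y$ and $e\in S(X,Y)$: $I'_e(X,Y)=\{V : \underline{V}\subseteq(\underline{X}\cup\underline{Y})\setminus\{e\}, V_f=(X\circ Y)_f\ \forall f\notin S(X,Y)\}$, $I'(X,Y)=\bigcup_{e\in S(X,Y)}I'_e(X,Y)$ (empty if $S(X,Y)=\emptyset$). $\mathcal{Q}(\mathcal{W})=\{X+(-Y): X,Y\in\mathcal{W}, I'(X,-Y)\cap\mathcal{W}=I'(-X,Y)\cap\mathcal{W}=\emptyset\}$. *)

theory Defs
  imports Main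
begin

datatype sign = Pos | Neg | Zero

type_synonym 'e signvec = "'e \<Rightarrow> sign"

definition sv_set :: "'e set \<Rightarrow> 'e signvec set" where
  "sv_set E = {X. \<forall>e. e \<notin> E \<longrightarrow> X e = Zero}"

definition zerov :: "'e signvec" where
  "zerov = (\<lambda>_. Zero)"

definition negv :: "'e signvec \<Rightarrow> 'e signvec" where
  "negv X = (\<lambda>e. case X e of Pos \<Rightarrow> Neg | Neg \<Rightarrow> Pos | Zero \<Rightarrow> Zero)"

definition supp :: "'e signvec \<Rightarrow> 'e set" where
  "supp X = {e. X e \<noteq> Zero}"

definition comp :: "'e signvec \<Rightarrow> 'e signvec \<Rightarrow> 'e signvec" where
  "comp X Y = (\<lambda>e. if X e \<noteq> Zero then X e else Y e)"

definition sep :: "'e signvec \<Rightarrow> 'e signvec \<Rightarrow> 'e set" where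
  "sep X Y = {e. (X e = Pos \<and> Y e = Neg) \<or> (X e = Neg \<and> Y e = Pos)}"

definition sv_sum :: "'e signvec \<Rightarrow> 'e signvec \<Rightarrow> 'e signvec" where
  "sv_sum X Y = (\<lambda>e. if e \<in> sep X Y then Zero else comp X Y e)"

definition compset :: "'e signvec set \<Rightarrow> 'e signvec set \<Rightarrow> 'e signvec set" where
  "compset A B = {comp X Y | X Y. X \<in> A \<and> Y \<in> B}"

definition oriented_matroid :: "'e set \<Rightarrow> 'e signvec set \<Rightarrow> bool" where
  "oriented_matroid F Om \<longleftrightarrow>
     Om \<subseteq> sv_set F \<and>
     zerov \<in> Om \<and>
     (\<forall>X\<in>Om. negv X \<in> Om) \<and>
     (\<forall>X\<in>Om. \<forall>Y\<in>Om. comp X Y \<in> Om) \<and>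
     (\<forall>X\<in>Om. \<forall>Y\<in>Om. \<forall>e. supp X = supp Y \<and> e \<in> sep X Y \<longrightarrow>
        (\<exists>Z\<in>Om. Z e = Zero \<and>
           (\<forall>f\<in>F. f \<notin> sep X Y \<longrightarrow> Z f = comp X Y f \<and> Z f = comp Y X f)))"

text \<open>Affine oriented matroid: the new element g is modelled as None in the
  ground set Some ` E \<union> {None}; restriction to E is precomposition with Some.\<close>
definition affine_om :: "'e set \<Rightarrow> 'e signvec set \<Rightarrow> bool" where
  "affine_om E W \<longleftrightarrow>
     (\<exists>Om :: 'e option signvec set. oriented_matroid (Some ` E \<union> {None}) Om \<and>
        W = {(\<lambda>e. X (Some e)) | X. X \<in> Om \<and> X None = Pos})"

definition I'e :: "'e signvec \<Rightarrow> 'e signvec \<Rightarrow> 'e \<Rightarrow> 'e signvec set" where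
  "I'e X Y e = {V. supp V \<subseteq> (supp X \<union> supp Y) - {e} \<and>
                   (\<forall>f. f \<notin> sep X Y \<longrightarrow> V f = comp X Y f)}"

definition I' :: "'e signvec \<Rightarrow> 'e signvec \<Rightarrow> 'e signvec set" where
  "I' X Y = (\<Union>e\<in>sep X Y. I'e X Y e)"

definition Qset :: "'e signvec set \<Rightarrow> 'e signvec set" where
  "Qset W = {sv_sum X (negv Y) | X Y. X \<in> W \<and> Y \<in> W \<and>
              I' X (negv Y) \<inter> W = {} \<and> I' (negv X) Y \<inter> W = {}}"

end

theory Submission
  imports Defs
begin


lemma sign_cases3: "s = Pos \<or> s = Neg \<or> s = Zero" by (cases s) auto

lemma comp_swap_comp: "comp (comp X Y) (comp Y X) = comp X Y"
  by (auto simp: comp_def fun_eq_iff)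

lemma sep_swap_comp: "sep (comp X Y) (comp Y X) = sep X Y"
  by (auto simp: comp_def sep_def)

lemma supp_swap_comp: "supp (comp X Y) = supp (comp Y X)"
  by (auto simp: comp_def supp_def)

lemma comp_off_sep: "f \<notin> sep X Y \<Longrightarrow> comp Y X f = comp X Y f"
  by (cases "X f"; cases "Y f") (auto simp: comp_def sep_def)

lemma om_elim:
  assumes om: "oriented_matroid F Om" and X: "X \<in> Om" and Y: "Y \<in> Om" and e: "e \<in> sep X Y"
  shows "\<exists>Z\<in>Om. Z e = Zero \<and> (\<forall>f. f \<notin> sep X Y \<longrightarrow> Z f = comp X Y f)"
proof -
  have c1: "comp X Y \<in> Om" and c2: "comp Y X \<in> Om" using om X Y unfolding oriented_matroid_def by auto
  have "supp (comp X Y) = supp (comp Y X)" by (rule supp_swap_comp)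
  moreover have "e \<in> sep (comp X Y) (comp Y X)" using e sep_swap_comp by metis
  moreover have O4: "\<forall>X\<in>Om. \<forall>Y\<in>Om. \<forall>e. supp X = supp Y \<and> e \<in> sep X Y \<longrightarrow>
        (\<exists>Z\<in>Om. Z e = Zero \<and>
           (\<forall>f\<in>F. f \<notin> sep X Y \<longrightarrow> Z f = comp X Y f \<and> Z f = comp Y X f))"
    using om unfolding oriented_matroid_def by (elim conjE) assumption
  ultimately obtain Z where Z: "Z \<in> Om" "Z e = Zero"
    "\<forall>f\<in>F. f \<notin> sep (comp X Y) (comp Y X) \<longrightarrow> Z f = comp (comp X Y) (comp Y X) f"
    using O4[rule_format, OF c1 c2, of e] by blast
  have sv: "\<And>V f. V \<in> Om \<Longrightarrow> f \<notin> F \<Longrightarrow> V f = Zero"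
    using om unfolding oriented_matroid_def sv_set_def by blast
  have "\<forall>f. f \<notin> sep X Y \<longrightarrow> Z f = comp X Y f"
  proof (intro allI impI)
    fix f assume f: "f \<notin> sep X Y"
    show "Z f = comp X Y f"
    proof (cases "f \<in> F")
      case True then show ?thesis using Z(3) f by (simp add: sep_swap_comp comp_swap_comp)
    next
      case False then show ?thesis using sv[OF Z(1)] sv[OF X] sv[OF Y] by (simp add: comp_def)
    qed
  qed
  then show ?thesis using Z by blast
qed

lemma sep_r: "f \<in> sep (\<lambda>e. X (Some e)) (\<lambda>e. Y (Some e)) \<longleftrightarrow> Some f \<in> sep X Y"
  by (simp add: sep_def)

lemma fwd_A1:
  assumes om: "oriented_matroid F Om"
    and W: "W = {(\<lambda>e. X (Some e)) | X. X \<in> Om \<and> X None = Pos}"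
  shows "\<forall>X\<in>W. \<forall>Y\<in>W. comp X (negv Y) \<in> W"
proof (intro ballI)
  fix X Y assume "X \<in> W" "Y \<in> W"
  then obtain A B where A: "A \<in> Om" "A None = Pos" "X = (\<lambda>e. A (Some e))"
    and B: "B \<in> Om" "B None = Pos" "Y = (\<lambda>e. B (Some e))" using W by blast
  have "comp A (negv B) \<in> Om" using om A B unfolding oriented_matroid_def by blast
  moreover have "comp A (negv B) None = Pos" using A by (simp add: comp_def)
  moreover have "comp X (negv Y) = (\<lambda>e. comp A (negv B) (Some e))"
    using A B by (simp add: comp_def negv_def fun_eq_iff)
  ultimately show "comp X (negv Y) \<in> W" using W by blast
qed

lemma fwd_A2:
  assumes om: "oriented_matroid F Om"
    and W: "W = {(\<lambda>e. X (Some e)) | X. X \<in> Om \<and> X None = Pos}"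
  shows "\<forall>X\<in>W. \<forall>Y\<in>W. sep X Y \<noteq> {} \<longrightarrow> (\<forall>e\<in>sep X Y. I'e X Y e \<inter> W \<noteq> {})"
proof (intro ballI impI)
  fix X Y e assume "X \<in> W" "Y \<in> W" and e: "e \<in> sep X Y"
  then obtain A B where A: "A \<in> Om" "A None = Pos" "X = (\<lambda>e. A (Some e))"
    and B: "B \<in> Om" "B None = Pos" "Y = (\<lambda>e. B (Some e))" using W by blast
  have "Some e \<in> sep A B" using e A B by (simp add: sep_def)
  then obtain Z where Z: "Z \<in> Om" "Z (Some e) = Zero" "\<forall>f. f \<notin> sep A B \<longrightarrow> Z f = comp A B f"
    using om_elim[OF om A(1) B(1)] by blast
  have "None \<notin> sep A B" using A B by (simp add: sep_def)
  then have zn: "Z None = Pos" using Z(3) A by (simp add: comp_def)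
  let ?z = "\<lambda>e. Z (Some e)"
  have "?z \<in> W" using W Z(1) zn by blast
  moreover have "?z \<in> I'e X Y e"
    unfolding I'e_def
  proof (intro CollectI conjI allI impI subsetI)
    fix f assume "f \<in> supp ?z"
    then have nz: "Z (Some f) \<noteq> Zero" by (simp add: supp_def)
    then have "f \<noteq> e" using Z(2) by auto
    moreover have "f \<in> supp X \<union> supp Y"
    proof (cases "Some f \<in> sep A B")
      case True then show ?thesis using A B by (auto simp: sep_def supp_def)
    next
      case False then show ?thesis using Z(3) nz A B by (auto simp: comp_def supp_def split: if_splits)
    qed
    ultimately show "f \<in> supp X \<union> supp Y - {e}" by blast
  next
    fix f assume "f \<notin> sep X Y"
    then have "Some f \<notin> sep A B" using A B by (simp add: sep_def)
    then show "?z f = comp X Y f" using Z(3) A B by (simp add: comp_def)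
  qed
  ultimately show "I'e X Y e \<inter> W \<noteq> {}" by blast
qed


lemma I'e_iff: "V \<in> I'e A B e \<longleftrightarrow> V e = Zero \<and> (\<forall>f. V f \<noteq> Zero \<longrightarrow> A f \<noteq> Zero \<or> B f \<noteq> Zero) \<and>
     (\<forall>f. f \<notin> sep A B \<longrightarrow> V f = comp A B f)"
  unfolding I'e_def supp_def by blast

lemma sep_sym0: "sep X Y = sep Y X"
  by (auto simp: sep_def)

lemma I'e_sym: "I'e X Y e = I'e Y X e"
proof -
  have "(\<forall>f. f \<notin> sep X Y \<longrightarrow> V f = comp X Y f) \<longleftrightarrow> (\<forall>f. f \<notin> sep Y X \<longrightarrow> V f = comp Y X f)" for V
    using comp_off_sep sep_sym0 by metis
  then show ?thesis by (intro set_eqI) (simp only: I'e_iff, blast)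
qed

lemma sep_neg: "sep (negv X) (negv Y) = sep X Y"
proof (rule set_eqI)
  fix x show "x \<in> sep (negv X) (negv Y) \<longleftrightarrow> x \<in> sep X Y"
    by (cases "X x"; cases "Y x") (auto simp: sep_def negv_def)
qed

lemma negv_zero_iff[simp]: "negv V f = Zero \<longleftrightarrow> V f = Zero"
  by (auto simp: negv_def split: sign.splits)

lemma negv_comp_pt: "comp (negv X) (negv Y) f = negv (comp X Y) f"
  by (auto simp: negv_def comp_def split: sign.splits)

lemma I'e_neg: "V \<in> I'e X Y e \<Longrightarrow> negv V \<in> I'e (negv X) (negv Y) e"
  unfolding I'e_iff sep_neg negv_comp_pt negv_zero_iff
proof (elim conjE, intro conjI allI impI)
  fix f assume "\<forall>f. f \<notin> sep X Y \<longrightarrow> V f = comp X Y f" "f \<notin> sep X Y"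
  then show "negv V f = negv (comp X Y) f" by (simp add: negv_def)
qed auto

lemma aux_elim:
  assumes om: "oriented_matroid F Om" and V: "V \<in> Om" and P: "P \<in> Om" and H: "H \<in> Om"
    and Vn: "V None = Zero"
    and Vag: "\<forall>h. h \<notin> sep H P \<longrightarrow> V h = comp H P h"
    and f: "Some f \<in> sep H P" and Vf: "V (Some f) = H (Some f)"
  shows "\<exists>Z\<in>Om. Z None = P None \<and> (\<lambda>e. Z (Some e)) \<in> I'e (\<lambda>e. P (Some e)) (\<lambda>e. H (Some e)) f"
proof -
  have "Some f \<in> sep V P" using f Vf by (simp add: sep_def)
  then obtain Z where Z: "Z \<in> Om" "Z (Some f) = Zero" "\<forall>h. h \<notin> sep V P \<longrightarrow> Z h = comp V P h"
    using om_elim[OF om V P] by blast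
  have "None \<notin> sep V P" using Vn by (simp add: sep_def)
  then have zn: "Z None = P None" using Z(3) Vn by (simp add: comp_def)
  have "(\<lambda>e. Z (Some e)) \<in> I'e (\<lambda>e. P (Some e)) (\<lambda>e. H (Some e)) f"
    unfolding I'e_def
  proof (intro CollectI conjI allI impI subsetI)
    fix h assume "h \<in> supp (\<lambda>e. Z (Some e))"
    then have nz: "Z (Some h) \<noteq> Zero" by (simp add: supp_def)
    then have "h \<noteq> f" using Z(2) by auto
    moreover have "P (Some h) \<noteq> Zero \<or> H (Some h) \<noteq> Zero"
    proof (cases "Some h \<in> sep V P")
      case True then show ?thesis by (auto simp: sep_def)
    next
      case False
      then have "V (Some h) \<noteq> Zero \<or> P (Some h) \<noteq> Zero" using Z(3) nz by (auto simp: comp_def split: if_splits)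
      then show ?thesis
      proof
        assume v: "V (Some h) \<noteq> Zero"
        show ?thesis
        proof (cases "Some h \<in> sep H P")
          case True then show ?thesis by (auto simp: sep_def)
        next
          case False then show ?thesis using Vag v by (auto simp: comp_def split: if_splits)
        qed
      qed simp
    qed
    ultimately show "h \<in> supp (\<lambda>e. P (Some e)) \<union> supp (\<lambda>e. H (Some e)) - {f}" by (auto simp: supp_def)
  next
    fix h assume h: "h \<notin> sep (\<lambda>e. P (Some e)) (\<lambda>e. H (Some e))"
    then have h1: "Some h \<notin> sep H P" by (auto simp: sep_def)
    then have vh: "V (Some h) = comp H P (Some h)" using Vag by blast
    have h2: "Some h \<notin> sep V P" using h1 vh
      by (cases "H (Some h)"; cases "P (Some h)") (auto simp: sep_def comp_def)
    show "Z (Some h) = comp (\<lambda>e. P (Some e)) (\<lambda>e. H (Some e)) h"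
      using Z(3) h1 h2 vh
      by (cases "H (Some h)"; cases "P (Some h)") (auto simp: sep_def comp_def)
  qed
  then show ?thesis using Z(1) zn by blast
qed

lemma fwd_A3:
  assumes om: "oriented_matroid F Om"
    and W: "W = {(\<lambda>e. X (Some e)) | X. X \<in> Om \<and> X None = Pos}"
  shows "compset (Qset W) W \<subseteq> W"
proof
  fix q assume "q \<in> compset (Qset W) W"
  then obtain X Y w where q: "q = comp (sv_sum X (negv Y)) w" and XW: "X \<in> W" and YW: "Y \<in> W" and wW: "w \<in> W"
    and c1: "I' X (negv Y) \<inter> W = {}" and c2: "I' (negv X) Y \<inter> W = {}"
    unfolding compset_def Qset_def by blast
  obtain A where A: "A \<in> Om" "A None = Pos" "X = (\<lambda>e. A (Some e))" using XW W by blast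
  obtain B where B: "B \<in> Om" "B None = Pos" "Y = (\<lambda>e. B (Some e))" using YW W by blast
  obtain C where C: "C \<in> Om" "C None = Pos" "w = (\<lambda>e. C (Some e))" using wW W by blast
  define B' where "B' = negv B"
  have B': "B' \<in> Om" "B' None = Neg" "negv Y = (\<lambda>e. B' (Some e))"
    using om B unfolding B'_def oriented_matroid_def by (auto simp: negv_def)
  have "None \<in> sep A B'" using A B' by (simp add: sep_def)
  then obtain V where V: "V \<in> Om" "V None = Zero" "\<forall>h. h \<notin> sep A B' \<longrightarrow> V h = comp A B' h"
    using om_elim[OF om A(1) B'(1)] by blast
  have key: "\<And>f. V (Some f) = sv_sum X (negv Y) f"
  proof -
    fix f
    show "V (Some f) = sv_sum X (negv Y) f"
    proof (cases "Some f \<in> sep A B'")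
      case False
      then show ?thesis using V(3) A B' by (simp add: sv_sum_def sep_def comp_def)
    next
      case True
      then have fs: "f \<in> sep X (negv Y)" using A B' by (simp add: sep_def)
      have "V (Some f) = Zero"
      proof (rule ccontr)
        assume nz: "V (Some f) \<noteq> Zero"
        have "V (Some f) = A (Some f) \<or> V (Some f) = B' (Some f)"
          using True nz by (cases "V (Some f)") (auto simp: sep_def)
        then show False
        proof
          assume vf: "V (Some f) = A (Some f)"
          obtain Z where Z: "Z \<in> Om" "Z None = B' None"
            "(\<lambda>e. Z (Some e)) \<in> I'e (\<lambda>e. B' (Some e)) (\<lambda>e. A (Some e)) f"
            using aux_elim[OF om V(1) B'(1) A(1) V(2) V(3) True vf] by blast
          have "negv Z \<in> Om" using om Z(1) unfolding oriented_matroid_def by blast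
          moreover have "negv Z None = Pos" using Z(2) B' by (simp add: negv_def)
          ultimately have "(\<lambda>e. negv Z (Some e)) \<in> W" using W by blast
          moreover have "(\<lambda>e. negv Z (Some e)) \<in> I'e (negv X) Y f"
          proof -
            have "(\<lambda>e. Z (Some e)) \<in> I'e (negv Y) X f" using Z(3) A B' by simp
            then have "negv (\<lambda>e. Z (Some e)) \<in> I'e (negv (negv Y)) (negv X) f" by (rule I'e_neg)
            moreover have "negv (negv Y) = Y" by (auto simp: negv_def fun_eq_iff split: sign.splits)
            moreover have "negv (\<lambda>e. Z (Some e)) = (\<lambda>e. negv Z (Some e))" by (simp add: negv_def)
            ultimately show ?thesis using I'e_sym by metis
          qed
          moreover have "f \<in> sep (negv X) Y"
            using fs by (auto simp: sep_def negv_def split: sign.splits)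
          ultimately show False using c2 unfolding I'_def by blast
        next
          assume vf: "V (Some f) = B' (Some f)"
          have T2: "Some f \<in> sep B' A" using True by (auto simp: sep_def)
          have V3: "\<forall>h. h \<notin> sep B' A \<longrightarrow> V h = comp B' A h"
            using V(3) comp_off_sep by (metis (no_types, lifting) Int_iff sep_def mem_Collect_eq)
          obtain Z where Z: "Z \<in> Om" "Z None = A None"
            "(\<lambda>e. Z (Some e)) \<in> I'e (\<lambda>e. A (Some e)) (\<lambda>e. B' (Some e)) f"
            using aux_elim[OF om V(1) A(1) B'(1) V(2) V3 T2 vf] by blast
          have "(\<lambda>e. Z (Some e)) \<in> W" using W Z(1,2) A by auto
          moreover have "(\<lambda>e. Z (Some e)) \<in> I'e X (negv Y) f" using Z(3) A B' by simp
          ultimately show False using c1 fs unfolding I'_def by blast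
        qed
      qed
      then show ?thesis using fs by (simp add: sv_sum_def)
    qed
  qed
  have "comp V C \<in> Om" using om V C unfolding oriented_matroid_def by blast
  moreover have "comp V C None = Pos" using V C by (simp add: comp_def)
  moreover have "q = (\<lambda>e. comp V C (Some e))" using q key C by (simp add: comp_def fun_eq_iff)
  ultimately show "q \<in> W" using W by blast
qed




definition Tset :: "'e set \<Rightarrow> 'e signvec set \<Rightarrow> 'e signvec set" where
  "Tset E W = {V \<in> sv_set E. \<forall>X\<in>W. comp V X \<in> W \<and> comp (negv V) X \<in> W}"

lemma negv_negv[simp]: "negv (negv X) = X"
proof
  fix x show "negv (negv X) x = X x" by (cases "X x") (auto simp: negv_def)
qed

lemma negv_comp: "negv (comp X Y) = comp (negv X) (negv Y)"
proof
  fix x show "negv (comp X Y) x = comp (negv X) (negv Y) x"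
    by (cases "X x"; cases "Y x") (auto simp: negv_def comp_def)
qed

lemma sep_negv_swap: "sep (negv X) Y = sep X (negv Y)"
proof (rule set_eqI)
  fix x show "x \<in> sep (negv X) Y \<longleftrightarrow> x \<in> sep X (negv Y)"
    by (cases "X x"; cases "Y x") (auto simp: sep_def negv_def)
qed

lemma sep_sym: "sep X Y = sep Y X"
  by (auto simp: sep_def)

lemma I'eD:
  assumes "Z \<in> I'e A B e"
  shows "Z e = Zero" "\<And>f. f \<notin> sep A B \<Longrightarrow> Z f = comp A B f"
    "\<And>f. Z f \<noteq> Zero \<Longrightarrow> A f \<noteq> Zero \<or> B f \<noteq> Zero"
  using assms unfolding I'e_def supp_def by blast+

lemma sv_setD: "X \<in> sv_set E \<Longrightarrow> e \<notin> E \<Longrightarrow> X e = Zero"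
  by (simp add: sv_set_def)

lemma supp_sub: "X \<in> sv_set E \<Longrightarrow> supp X \<subseteq> E"
  by (auto simp: sv_set_def supp_def)

definition lift :: "sign \<Rightarrow> 'e signvec \<Rightarrow> 'e option signvec" where
  "lift s V = (\<lambda>x. case x of None \<Rightarrow> s | Some e \<Rightarrow> V e)"

lemma lift_simps[simp]: "lift s V None = s" "lift s V (Some e) = V e"
  by (simp_all add: lift_def)

lemma QsetI: "X \<in> W \<Longrightarrow> Y \<in> W \<Longrightarrow> I' X (negv Y) \<inter> W = {} \<Longrightarrow> I' (negv X) Y \<inter> W = {}
   \<Longrightarrow> sv_sum X (negv Y) \<in> Qset W"
  unfolding Qset_def by blast

lemma I'_sym: "I' X Y = I' Y X"
proof -
  have "I'e X Y = I'e Y X" by (rule ext) (rule I'e_sym)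
  then show ?thesis unfolding I'_def by (simp add: sep_sym[of X Y])
qed

locale rv =
  fixes E :: "'e set" and W :: "'e signvec set"
  assumes fin: "finite E" and svW: "W \<subseteq> sv_set E"
    and A1: "\<forall>X\<in>W. \<forall>Y\<in>W. comp X (negv Y) \<in> W"
    and A2: "\<forall>X\<in>W. \<forall>Y\<in>W. sep X Y \<noteq> {} \<longrightarrow> (\<forall>e\<in>sep X Y. I'e X Y e \<inter> W \<noteq> {})"
    and A3: "compset (Qset W) W \<subseteq> W"
begin

lemma A1': "X \<in> W \<Longrightarrow> Y \<in> W \<Longrightarrow> comp X (negv Y) \<in> W"
  using A1 by blast

lemma A2': "X \<in> W \<Longrightarrow> Y \<in> W \<Longrightarrow> e \<in> sep X Y \<Longrightarrow> \<exists>Z\<in>W. Z \<in> I'e X Y e"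
  using A2 by blast

lemma compW: "X \<in> W \<Longrightarrow> Y \<in> W \<Longrightarrow> comp X Y \<in> W"
proof -
  assume X: "X \<in> W" and Y: "Y \<in> W"
  have "comp X (negv Y) \<in> W" using A1' X Y .
  then have "comp X (negv (comp X (negv Y))) \<in> W" using A1' X by blast
  moreover have "comp X (negv (comp X (negv Y))) = comp X Y"
    by (auto simp: comp_def negv_def fun_eq_iff split: sign.splits)
  ultimately show ?thesis by simp
qed

lemma W_sv: "X \<in> W \<Longrightarrow> X \<in> sv_set E" using svW by blast

lemma Q_T: "Qset W \<subseteq> Tset E W"
proof
  fix q assume q: "q \<in> Qset W"
  then obtain X Y where qd: "q = sv_sum X (negv Y)" and XY: "X \<in> W" "Y \<in> W"
    and c1: "I' X (negv Y) \<inter> W = {}" and c2: "I' (negv X) Y \<inter> W = {}"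
    unfolding Qset_def by blast
  have nq: "negv q = sv_sum Y (negv X)"
  proof
    fix x show "negv q x = sv_sum Y (negv X) x" unfolding qd
      by (cases "X x"; cases "Y x") (auto simp: sv_sum_def negv_def comp_def sep_def)
  qed
  have e1: "I' Y (negv X) \<inter> W = {}" using c2 I'_sym[of Y "negv X"] by simp
  have e2: "I' (negv Y) X \<inter> W = {}" using c1 I'_sym[of "negv Y" X] by simp
  have "negv q \<in> Qset W" unfolding nq by (rule QsetI[OF XY(2) XY(1) e1 e2])
  have "q \<in> sv_set E" unfolding sv_set_def
  proof (intro CollectI allI impI)
    fix e assume "e \<notin> E"
    then have "X e = Zero" "Y e = Zero" using sv_setD[OF W_sv[OF XY(1)]] sv_setD[OF W_sv[OF XY(2)]] by auto
    then show "q e = Zero" unfolding qd sv_sum_def comp_def negv_def by simp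
  qed
  moreover have "\<forall>w\<in>W. comp q w \<in> W" using A3 q unfolding compset_def by blast
  moreover have "\<forall>w\<in>W. comp (negv q) w \<in> W" using A3 \<open>negv q \<in> Qset W\<close> unfolding compset_def by blast
  ultimately show "q \<in> Tset E W" unfolding Tset_def by blast
qed

lemma Tset_neg: "V \<in> Tset E W \<Longrightarrow> negv V \<in> Tset E W"
  unfolding Tset_def sv_set_def by auto

lemma TW: "V \<in> Tset E W \<Longrightarrow> X \<in> W \<Longrightarrow> comp V X \<in> W"
  unfolding Tset_def by blast

lemma finite_sep: "X \<in> W \<Longrightarrow> finite (sep X Y)"
proof -
  assume "X \<in> W"
  then have "sep X Y \<subseteq> supp X" by (auto simp: sep_def supp_def)
  then have "sep X Y \<subseteq> E" using W_sv supp_sub \<open>X \<in> W\<close> by blast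
  then show ?thesis using fin finite_subset by blast
qed

lemma P_lemma:
  "X \<in> W \<Longrightarrow> Y \<in> W \<Longrightarrow> \<exists>V\<in>Tset E W. \<forall>f. f \<notin> sep X (negv Y) \<longrightarrow> V f = comp X (negv Y) f"
proof (induction "card (sep X (negv Y))" arbitrary: X Y rule: less_induct)
  case less
  note XW = less.prems(1) and YW = less.prems(2)
  show ?case
  proof (cases "I' X (negv Y) \<inter> W = {} \<and> I' (negv X) Y \<inter> W = {}")
    case True
    then have "sv_sum X (negv Y) \<in> Qset W" using QsetI XW YW by blast
    then have "sv_sum X (negv Y) \<in> Tset E W" using Q_T by blast
    moreover have "\<forall>f. f \<notin> sep X (negv Y) \<longrightarrow> sv_sum X (negv Y) f = comp X (negv Y) f"
      by (simp add: sv_sum_def)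
    ultimately show ?thesis by blast
  next
    case False
    then have "\<not> I' X (negv Y) \<inter> W = {} \<or> \<not> I' (negv X) Y \<inter> W = {}" by blast
    then show ?thesis
    proof
      assume "\<not> I' X (negv Y) \<inter> W = {}"
      then obtain e X' where e: "e \<in> sep X (negv Y)" and X': "X' \<in> I'e X (negv Y) e" "X' \<in> W"
        unfolding I'_def by blast
      have sub: "sep X' (negv Y) \<subseteq> sep X (negv Y)"
      proof
        fix h assume h: "h \<in> sep X' (negv Y)"
        show "h \<in> sep X (negv Y)"
        proof (rule ccontr)
          assume hn: "h \<notin> sep X (negv Y)"
          then have "X' h = comp X (negv Y) h" using I'eD(2)[OF X'(1)] by blast
          then show False using h hn by (auto simp: sep_def comp_def split: if_splits)
        qed
      qed
      have "e \<notin> sep X' (negv Y)" using I'eD(1)[OF X'(1)] by (simp add: sep_def)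
      then have "sep X' (negv Y) \<subset> sep X (negv Y)" using sub e by blast
      then have "card (sep X' (negv Y)) < card (sep X (negv Y))"
        using finite_sep[OF XW] psubset_card_mono by blast
      then obtain V where V: "V \<in> Tset E W" "\<forall>f. f \<notin> sep X' (negv Y) \<longrightarrow> V f = comp X' (negv Y) f"
        using less.hyps[OF _ X'(2) YW] by blast
      have "\<forall>f. f \<notin> sep X (negv Y) \<longrightarrow> V f = comp X (negv Y) f"
      proof (intro allI impI)
        fix f assume f: "f \<notin> sep X (negv Y)"
        then have f2: "f \<notin> sep X' (negv Y)" using sub by blast
        have "X' f = comp X (negv Y) f" using I'eD(2)[OF X'(1)] f by blast
        then show "V f = comp X (negv Y) f" using V(2) f2
          by (auto simp: comp_def)
      qed
      then show ?thesis using V(1) by blast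
    next
      assume "\<not> I' (negv X) Y \<inter> W = {}"
      then obtain e Y' where e: "e \<in> sep (negv X) Y" and Y': "Y' \<in> I'e (negv X) Y e" "Y' \<in> W"
        unfolding I'_def by blast
      have sub: "sep X (negv Y') \<subseteq> sep X (negv Y)"
      proof
        fix h assume h: "h \<in> sep X (negv Y')"
        show "h \<in> sep X (negv Y)"
        proof (rule ccontr)
          assume a: "h \<notin> sep X (negv Y)"
          then have "h \<notin> sep (negv X) Y" by (simp add: sep_negv_swap)
          then have "Y' h = comp (negv X) Y h" using I'eD(2)[OF Y'(1)] by blast
          then show False using h a
            by (cases "X h"; cases "Y h") (auto simp: sep_def comp_def negv_def)
        qed
      qed
      have "e \<notin> sep X (negv Y')" using I'eD(1)[OF Y'(1)] by (simp add: sep_def negv_def)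
      moreover have "e \<in> sep X (negv Y)" using e by (simp add: sep_negv_swap)
      ultimately have "sep X (negv Y') \<subset> sep X (negv Y)" using sub by blast
      then have "card (sep X (negv Y')) < card (sep X (negv Y))"
        using finite_sep[OF XW] psubset_card_mono by blast
      then obtain V where V: "V \<in> Tset E W" "\<forall>f. f \<notin> sep X (negv Y') \<longrightarrow> V f = comp X (negv Y') f"
        using less.hyps[OF _ XW Y'(2)] by blast
      have "\<forall>f. f \<notin> sep X (negv Y) \<longrightarrow> V f = comp X (negv Y) f"
      proof (intro allI impI)
        fix f assume f: "f \<notin> sep X (negv Y)"
        then have f2: "f \<notin> sep X (negv Y')" using sub by blast
        have "f \<notin> sep (negv X) Y" using f by (simp add: sep_negv_swap)
        then have "Y' f = comp (negv X) Y f" using I'eD(2)[OF Y'(1)] by blast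
        then show "V f = comp X (negv Y) f" using V(2) f2
          by (cases "X f"; cases "Y f") (auto simp: comp_def negv_def)
      qed
      then show ?thesis using V(1) by blast
    qed
  qed
qed


lemma supp_W_finite: "X \<in> W \<Longrightarrow> finite (supp X)"
proof -
  assume "X \<in> W"
  then have "supp X \<subseteq> E" by (rule supp_sub[OF W_sv])
  then show ?thesis using fin by (rule finite_subset)
qed

lemma TT_elim:
  assumes V1: "V1 \<in> Tset E W" and V2: "V2 \<in> Tset E W" and ss: "supp V1 = supp V2"
    and e: "e \<in> sep V1 V2"
  shows "\<exists>Z\<in>Tset E W. Z e = Zero \<and> (\<forall>f. f \<notin> sep V1 V2 \<longrightarrow> Z f = comp V1 V2 f)"
proof (cases "W = {}")
  case True
  have "sv_sum V1 V2 \<in> sv_set E" using V1 V2 unfolding Tset_def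
    by (auto simp: sv_set_def sv_sum_def comp_def)
  then have "sv_sum V1 V2 \<in> Tset E W" using True unfolding Tset_def by blast
  moreover have "sv_sum V1 V2 e = Zero" using e by (simp add: sv_sum_def)
  ultimately show ?thesis by (auto simp: sv_sum_def)
next
  case False
  define D where "D = supp V1"
  define m where "m = (LEAST n. \<exists>X\<in>W. card (supp X - D) = n)"
  have "\<exists>n. \<exists>X\<in>W. card (supp X - D) = n" using False by blast
  then have "\<exists>X\<in>W. card (supp X - D) = m" unfolding m_def by (rule LeastI_ex)
  then obtain X where XW: "X \<in> W" and Xm: "card (supp X - D) = m" by blast
  have minX: "\<And>Y. Y \<in> W \<Longrightarrow> m \<le> card (supp Y - D)" unfolding m_def
    by (rule Least_le) blast
  have V1e: "V1 e \<noteq> Zero" and V2e: "V2 e \<noteq> Zero" using e by (auto simp: sep_def)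
  have offD: "\<And>f. f \<notin> D \<Longrightarrow> V1 f = Zero \<and> V2 f = Zero"
    using ss unfolding D_def supp_def by blast
  have inD: "\<And>f. f \<in> D \<Longrightarrow> V1 f \<noteq> Zero \<and> V2 f \<noteq> Zero"
    using ss unfolding D_def supp_def by blast
  have A1W: "comp V1 X \<in> W" and B1W: "comp V2 X \<in> W" using TW V1 V2 XW by auto
  have "e \<in> sep (comp V1 X) (comp V2 X)" using e by (auto simp: sep_def comp_def)
  then obtain Z1 where Z1W: "Z1 \<in> W" and Z1: "Z1 \<in> I'e (comp V1 X) (comp V2 X) e"
    using A2'[OF A1W B1W] by blast
  have A2W: "comp (negv V1) X \<in> W" and B2W: "comp (negv V2) X \<in> W"
    using TW Tset_neg V1 V2 XW by auto
  have "e \<in> sep (comp (negv V1) X) (comp (negv V2) X)" using e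
    by (auto simp: sep_def comp_def negv_def)
  then obtain Z2 where Z2W: "Z2 \<in> W" and Z2: "Z2 \<in> I'e (comp (negv V1) X) (comp (negv V2) X) e"
    using A2'[OF A2W B2W] by blast
  obtain V where VT: "V \<in> Tset E W" and V: "\<forall>f. f \<notin> sep Z1 (negv Z2) \<longrightarrow> V f = comp Z1 (negv Z2) f"
    using P_lemma[OF Z1W Z2W] by blast
  have Z1v: "\<And>f. f \<notin> sep V1 V2 \<Longrightarrow> Z1 f = comp V1 X f"
  proof -
    fix f assume f: "f \<notin> sep V1 V2"
    then have "f \<notin> sep (comp V1 X) (comp V2 X)" using offD inD
      by (cases "f \<in> D") (auto simp: sep_def comp_def)
    then have "Z1 f = comp (comp V1 X) (comp V2 X) f" using I'eD(2)[OF Z1] by blast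
    then show "Z1 f = comp V1 X f" using offD inD by (cases "f \<in> D") (auto simp: comp_def)
  qed
  have Z2v: "\<And>f. f \<notin> sep V1 V2 \<Longrightarrow> Z2 f = comp (negv V1) X f"
  proof -
    fix f assume f: "f \<notin> sep V1 V2"
    then have "f \<notin> sep (comp (negv V1) X) (comp (negv V2) X)" using offD inD
      by (cases "f \<in> D") (auto simp: sep_def comp_def negv_def split: sign.splits)
    then have "Z2 f = comp (comp (negv V1) X) (comp (negv V2) X) f" using I'eD(2)[OF Z2] by blast
    then show "Z2 f = comp (negv V1) X f" using offD inD
      by (cases "f \<in> D") (auto simp: comp_def negv_def split: sign.splits)
  qed
  have Ve: "V e = Zero"
  proof -
    have "Z1 e = Zero" "Z2 e = Zero" using I'eD(1)[OF Z1] I'eD(1)[OF Z2] by auto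
    then show ?thesis using V by (auto simp: sep_def comp_def negv_def)
  qed
  have VD: "\<And>f. f \<notin> sep V1 V2 \<Longrightarrow> f \<in> D \<Longrightarrow> V f = V1 f"
  proof -
    fix f assume f: "f \<notin> sep V1 V2" "f \<in> D"
    have "Z1 f = V1 f" "Z2 f = negv V1 f" using Z1v[OF f(1)] Z2v[OF f(1)] inD[OF f(2)]
      by (auto simp: comp_def negv_def split: sign.splits)
    moreover have "V1 f \<noteq> Zero" using inD f by blast
    ultimately show "V f = V1 f" using V
      by (cases "V1 f") (auto simp: sep_def comp_def negv_def)
  qed
  have VX0: "\<And>f. f \<notin> D \<Longrightarrow> X f = Zero \<Longrightarrow> V f = Zero"
  proof -
    fix f assume f: "f \<notin> D" "X f = Zero"
    then have fs: "f \<notin> sep V1 V2" using offD by (auto simp: sep_def)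
    have "Z1 f = Zero" "Z2 f = Zero" using Z1v[OF fs] Z2v[OF fs] offD[OF f(1)] f(2)
      by (auto simp: comp_def negv_def)
    then show "V f = Zero" using V by (auto simp: sep_def comp_def negv_def)
  qed
  have suppV: "supp V \<subseteq> D \<union> supp X" using VX0 by (auto simp: supp_def)
  have VX: "\<And>f. f \<notin> D \<Longrightarrow> V f = Zero"
  proof (rule ccontr)
    fix f assume fD: "f \<notin> D" and nz: "V f \<noteq> Zero"
    then have Xf: "X f \<noteq> Zero" using VX0 by blast
    define V' where "V' = (if V f = X f then negv V else V)"
    have V'T: "V' \<in> Tset E W" using VT Tset_neg unfolding V'_def by auto
    have V'f: "V' f \<noteq> Zero \<and> V' f \<noteq> X f" using nz Xf unfolding V'_def
      by (cases "V f"; cases "X f") (auto simp: negv_def)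
    have suppV': "supp V' = supp V" unfolding V'_def supp_def
      by (auto simp: negv_def split: sign.splits)
    define Y where "Y = comp V' X"
    have YW: "Y \<in> W" using TW[OF V'T XW] unfolding Y_def .
    have "f \<in> sep X Y" using V'f Xf unfolding Y_def
      by (cases "V' f"; cases "X f") (auto simp: sep_def comp_def)
    then obtain X' where X'W: "X' \<in> W" and X': "X' \<in> I'e X Y f" using A2'[OF XW YW] by blast
    have "supp X' \<subseteq> (supp X \<union> supp Y) - {f}" using X' unfolding I'e_def by blast
    moreover have "supp Y \<subseteq> supp V \<union> supp X" unfolding Y_def using suppV'
      by (auto simp: supp_def comp_def)
    ultimately have "supp X' - D \<subseteq> (supp X - D) - {f}" using suppV by blast
    moreover have "f \<in> supp X - D" using Xf fD by (simp add: supp_def)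
    ultimately have "supp X' - D \<subset> supp X - D" by blast
    then have "card (supp X' - D) < card (supp X - D)"
      using supp_W_finite[OF XW] by (meson finite_Diff psubset_card_mono)
    then show False using minX[OF X'W] Xm by simp
  qed
  have "\<forall>f. f \<notin> sep V1 V2 \<longrightarrow> V f = comp V1 V2 f"
  proof (intro allI impI)
    fix f assume f: "f \<notin> sep V1 V2"
    show "V f = comp V1 V2 f"
    proof (cases "f \<in> D")
      case True then show ?thesis using VD f inD by (simp add: comp_def)
    next
      case False then show ?thesis using VX offD by (simp add: comp_def)
    qed
  qed
  then show ?thesis using VT Ve by blast
qed


lemma T_comp: "V \<in> Tset E W \<Longrightarrow> U \<in> Tset E W \<Longrightarrow> comp V U \<in> Tset E W"
proof -
  assume V: "V \<in> Tset E W" and U: "U \<in> Tset E W"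
  have "comp V U \<in> sv_set E" using V U unfolding Tset_def by (auto simp: sv_set_def comp_def)
  moreover have "\<forall>X\<in>W. comp (comp V U) X \<in> W"
  proof
    fix X assume "X \<in> W"
    then have "comp V (comp U X) \<in> W" using TW V U by blast
    moreover have "comp V (comp U X) = comp (comp V U) X" by (auto simp: comp_def fun_eq_iff)
    ultimately show "comp (comp V U) X \<in> W" by simp
  qed
  moreover have "\<forall>X\<in>W. comp (negv (comp V U)) X \<in> W"
  proof
    fix X assume "X \<in> W"
    then have "comp (negv V) (comp (negv U) X) \<in> W" using TW Tset_neg V U by blast
    moreover have "comp (negv V) (comp (negv U) X) = comp (negv (comp V U)) X"
      by (auto simp: comp_def negv_def fun_eq_iff split: sign.splits)
    ultimately show "comp (negv (comp V U)) X \<in> W" by simp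
  qed
  ultimately show ?thesis unfolding Tset_def by blast
qed

lemma W_comp_T: "X \<in> W \<Longrightarrow> V \<in> Tset E W \<Longrightarrow> comp X V \<in> W"
proof -
  assume X: "X \<in> W" and V: "V \<in> Tset E W"
  have "comp X (comp V X) \<in> W" using compW X TW[OF V X] by blast
  moreover have "comp X (comp V X) = comp X V" by (auto simp: comp_def fun_eq_iff)
  ultimately show ?thesis by simp
qed

definition OmC :: "'e option signvec set" where
  "OmC = lift Zero ` Tset E W \<union> lift Pos ` W \<union> (\<lambda>X. lift Neg (negv X)) ` W"

lemma iii:
  assumes XW: "X \<in> W" and YW: "Y \<in> W" and e: "e \<in> sep X (negv Y)"
  shows "\<exists>Z\<in>OmC. Z (Some e) = Zero \<and> (\<forall>h. h \<notin> sep X (negv Y) \<longrightarrow> Z (Some h) = comp X (negv Y) h)"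
proof -
  obtain V where VT: "V \<in> Tset E W" and V: "\<forall>f. f \<notin> sep X (negv Y) \<longrightarrow> V f = comp X (negv Y) f"
    using P_lemma[OF XW YW] by blast
  have XeYe: "X e \<noteq> Zero \<and> Y e = X e" using e
    by (cases "X e"; cases "Y e") (auto simp: sep_def negv_def)
  consider "V e = Zero" | "V e \<noteq> Zero \<and> V e \<noteq> X e" | "V e = X e" by blast
  then show ?thesis
  proof cases
    case 1
    have "lift Zero V \<in> OmC" unfolding OmC_def using VT by blast
    then show ?thesis using 1 V by (intro bexI[of _ "lift Zero V"]) auto
  next
    case 2
    define U where "U = comp V Y"
    have UW: "U \<in> W" using TW[OF VT YW] unfolding U_def .
    have "e \<in> sep X U" using 2 XeYe unfolding U_def
      by (cases "X e"; cases "V e") (auto simp: sep_def comp_def)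
    then obtain Z where ZW: "Z \<in> W" and Z: "Z \<in> I'e X U e" using A2'[OF XW UW] by blast
    have "\<forall>h. h \<notin> sep X (negv Y) \<longrightarrow> Z h = comp X (negv Y) h"
    proof (intro allI impI)
      fix h assume h: "h \<notin> sep X (negv Y)"
      then have Vh: "V h = comp X (negv Y) h" using V by blast
      have "h \<notin> sep X U \<and> comp X U h = comp X (negv Y) h" using h Vh unfolding U_def
        by (cases "X h"; cases "Y h") (auto simp: sep_def comp_def negv_def)
      then show "Z h = comp X (negv Y) h" using I'eD(2)[OF Z] by metis
    qed
    moreover have "Z e = Zero" using I'eD(1)[OF Z] .
    moreover have "lift Pos Z \<in> OmC" unfolding OmC_def using ZW by blast
    ultimately show ?thesis by (intro bexI[of _ "lift Pos Z"]) auto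
  next
    case 3
    define U where "U = comp (negv V) X"
    have UW: "U \<in> W" using TW[OF Tset_neg[OF VT] XW] unfolding U_def .
    have "e \<in> sep Y U" using 3 XeYe unfolding U_def
      by (cases "X e") (auto simp: sep_def comp_def negv_def)
    then obtain Z where ZW: "Z \<in> W" and Z: "Z \<in> I'e Y U e" using A2'[OF YW UW] by blast
    have "\<forall>h. h \<notin> sep X (negv Y) \<longrightarrow> negv Z h = comp X (negv Y) h"
    proof (intro allI impI)
      fix h assume h: "h \<notin> sep X (negv Y)"
      then have Vh: "V h = comp X (negv Y) h" using V by blast
      have "h \<notin> sep Y U \<and> negv (comp Y U) h = comp X (negv Y) h" using h Vh unfolding U_def
        by (cases "X h"; cases "Y h") (auto simp: sep_def comp_def negv_def)
      then show "negv Z h = comp X (negv Y) h" using I'eD(2)[OF Z] by (metis negv_def)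
    qed
    moreover have "negv Z e = Zero" using I'eD(1)[OF Z] by (simp add: negv_def)
    moreover have "lift Neg (negv Z) \<in> OmC" unfolding OmC_def using ZW by blast
    ultimately show ?thesis by (intro bexI[of _ "lift Neg (negv Z)"]) auto
  qed
qed


lemma lift_comp: "comp (lift s V) (lift t U) = lift (if s \<noteq> Zero then s else t) (comp V U)"
proof
  fix x show "comp (lift s V) (lift t U) x = lift (if s \<noteq> Zero then s else t) (comp V U) x"
    by (cases x) (auto simp: comp_def)
qed

lemma lift_neg0: "negv (lift Zero V) = lift Zero (negv V)"
proof
  fix x show "negv (lift Zero V) x = lift Zero (negv V) x" by (cases x) (auto simp: negv_def)
qed

lemma lift_negP: "negv (lift Pos V) = lift Neg (negv V)"
proof
  fix x show "negv (lift Pos V) x = lift Neg (negv V) x" by (cases x) (auto simp: negv_def)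
qed

lemma lift_negN: "negv (lift Neg (negv V)) = lift Pos V"
proof
  fix x show "negv (lift Neg (negv V)) x = lift Pos V x"
  proof (cases x)
    case None then show ?thesis by (simp add: negv_def)
  next
    case (Some a) then show ?thesis by (cases "V a") (simp_all add: negv_def)
  qed
qed

lemma OmC_cases:
  assumes "A \<in> OmC"
  obtains (Z) V where "V \<in> Tset E W" "A = lift Zero V"
    | (P) X where "X \<in> W" "A = lift Pos X"
    | (N) X where "X \<in> W" "A = lift Neg (negv X)"
  using assms unfolding OmC_def by blast

lemma OmC_Z: "V \<in> Tset E W \<Longrightarrow> lift Zero V \<in> OmC" unfolding OmC_def by blast
lemma OmC_P: "X \<in> W \<Longrightarrow> lift Pos X \<in> OmC" unfolding OmC_def by blast
lemma OmC_N: "X \<in> W \<Longrightarrow> lift Neg (negv X) \<in> OmC" unfolding OmC_def by blast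

lemma OmC_neg: "A \<in> OmC \<Longrightarrow> negv A \<in> OmC"
  by (erule OmC_cases) (auto simp: lift_neg0 lift_negP lift_negN intro: OmC_Z OmC_P OmC_N Tset_neg)

lemma OmC_comp: "A \<in> OmC \<Longrightarrow> B \<in> OmC \<Longrightarrow> comp A B \<in> OmC"
proof (erule OmC_cases; erule OmC_cases)
  fix V U assume "V \<in> Tset E W" "A = lift Zero V" "U \<in> Tset E W" "B = lift Zero U"
  then show ?thesis by (simp add: lift_comp OmC_Z T_comp)
next
  fix V Y assume "V \<in> Tset E W" "A = lift Zero V" "Y \<in> W" "B = lift Pos Y"
  then show ?thesis by (simp add: lift_comp OmC_P TW)
next
  fix V Y assume a: "V \<in> Tset E W" "A = lift Zero V" "Y \<in> W" "B = lift Neg (negv Y)"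
  have "comp V (negv Y) = negv (comp (negv V) Y)" by (simp add: negv_comp)
  moreover have "comp (negv V) Y \<in> W" using a TW Tset_neg by blast
  ultimately show ?thesis using a by (simp add: lift_comp OmC_N)
next
  fix X V assume "X \<in> W" "A = lift Pos X" "V \<in> Tset E W" "B = lift Zero V"
  then show ?thesis by (simp add: lift_comp OmC_P W_comp_T)
next
  fix X Y assume "X \<in> W" "A = lift Pos X" "Y \<in> W" "B = lift Pos Y"
  then show ?thesis by (simp add: lift_comp OmC_P compW)
next
  fix X Y assume "X \<in> W" "A = lift Pos X" "Y \<in> W" "B = lift Neg (negv Y)"
  then show ?thesis by (simp add: lift_comp OmC_P A1')
next
  fix X V assume a: "X \<in> W" "A = lift Neg (negv X)" "V \<in> Tset E W" "B = lift Zero V"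
  have "comp (negv X) V = negv (comp X (negv V))" by (simp add: negv_comp)
  moreover have "comp X (negv V) \<in> W" using a W_comp_T Tset_neg by blast
  ultimately show ?thesis using a by (simp add: lift_comp OmC_N)
next
  fix X Y assume a: "X \<in> W" "A = lift Neg (negv X)" "Y \<in> W" "B = lift Pos Y"
  have "comp (negv X) Y = negv (comp X (negv Y))" by (simp add: negv_comp)
  moreover have "comp X (negv Y) \<in> W" using a A1' by blast
  ultimately show ?thesis using a by (simp add: lift_comp OmC_N)
next
  fix X Y assume a: "X \<in> W" "A = lift Neg (negv X)" "Y \<in> W" "B = lift Neg (negv Y)"
  have "comp (negv X) (negv Y) = negv (comp X Y)" by (simp add: negv_comp)
  moreover have "comp X Y \<in> W" using a compW by blast
  ultimately show ?thesis using a by (simp add: lift_comp OmC_N)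
qed

lemma sep_lift_Some: "Some h \<in> sep (lift s V) (lift t U) \<longleftrightarrow> h \<in> sep V U"
  by (simp add: sep_def)

lemma sep_lift_None: "None \<in> sep (lift s V) (lift t U) \<longleftrightarrow> (s = Pos \<and> t = Neg) \<or> (s = Neg \<and> t = Pos)"
  by (simp add: sep_def)

lemma None_supp: "None \<in> supp (lift s V) \<longleftrightarrow> s \<noteq> Zero"
  by (simp add: supp_def)

lemma elim_PN:
  assumes XW: "X \<in> W" and YW: "Y \<in> W" and e: "e \<in> sep (lift Pos X) (lift Neg (negv Y))"
  shows "\<exists>Z\<in>OmC. Z e = Zero \<and> (\<forall>f. f \<notin> sep (lift Pos X) (lift Neg (negv Y)) \<longrightarrow>
            Z f = comp (lift Pos X) (lift Neg (negv Y)) f)"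
proof (cases e)
  case None
  obtain V where VT: "V \<in> Tset E W" and V: "\<forall>f. f \<notin> sep X (negv Y) \<longrightarrow> V f = comp X (negv Y) f"
    using P_lemma[OF XW YW] by blast
  have "\<forall>f. f \<notin> sep (lift Pos X) (lift Neg (negv Y)) \<longrightarrow> lift Zero V f = comp (lift Pos X) (lift Neg (negv Y)) f"
  proof (intro allI impI)
    fix f assume f: "f \<notin> sep (lift Pos X) (lift Neg (negv Y))"
    then obtain h where h: "f = Some h" by (cases f) (auto simp: sep_lift_None)
    then show "lift Zero V f = comp (lift Pos X) (lift Neg (negv Y)) f"
      using f V by (simp add: sep_lift_Some lift_comp)
  qed
  then show ?thesis using None OmC_Z[OF VT] by (intro bexI[of _ "lift Zero V"]) auto
next
  case (Some e')
  then have "e' \<in> sep X (negv Y)" using e by (simp add: sep_lift_Some)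
  then obtain Z where Z: "Z \<in> OmC" "Z (Some e') = Zero"
    "\<forall>h. h \<notin> sep X (negv Y) \<longrightarrow> Z (Some h) = comp X (negv Y) h"
    using iii[OF XW YW] by blast
  have "\<forall>f. f \<notin> sep (lift Pos X) (lift Neg (negv Y)) \<longrightarrow> Z f = comp (lift Pos X) (lift Neg (negv Y)) f"
  proof (intro allI impI)
    fix f assume f: "f \<notin> sep (lift Pos X) (lift Neg (negv Y))"
    then obtain h where h: "f = Some h" by (cases f) (auto simp: sep_lift_None)
    then show "Z f = comp (lift Pos X) (lift Neg (negv Y)) f"
      using f Z(3) by (simp add: sep_lift_Some lift_comp)
  qed
  then show ?thesis using Z Some by blast
qed

lemma elim_swap:
  assumes "\<exists>Z\<in>OmC. Z e = Zero \<and> (\<forall>f. f \<notin> sep B A \<longrightarrow> Z f = comp B A f)"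
  shows "\<exists>Z\<in>OmC. Z e = Zero \<and> (\<forall>f. f \<notin> sep A B \<longrightarrow> Z f = comp A B f)"
  using assms comp_off_sep sep_sym by metis

lemma OmC_elim:
  assumes A: "A \<in> OmC" and B: "B \<in> OmC" and ss: "supp A = supp B" and e: "e \<in> sep A B"
  shows "\<exists>Z\<in>OmC. Z e = Zero \<and> (\<forall>f. f \<notin> sep A B \<longrightarrow> Z f = comp A B f)"
  using A
proof (cases rule: OmC_cases)
  case (Z V1)
  note A' = Z
  show ?thesis using B
  proof (cases rule: OmC_cases)
    case (Z V2)
    have s12: "supp V1 = supp V2"
    proof -
      have "\<And>h. h \<in> supp V1 \<longleftrightarrow> Some h \<in> supp A" using A' by (simp add: supp_def)
      moreover have "\<And>h. h \<in> supp V2 \<longleftrightarrow> Some h \<in> supp B" using Z by (simp add: supp_def)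
      ultimately show ?thesis using ss by blast
    qed
    obtain e' where e': "e = Some e'" using e A' Z by (cases e) (auto simp: sep_lift_None)
    then have "e' \<in> sep V1 V2" using e A' Z by (simp add: sep_lift_Some)
    then obtain Zv where Zv: "Zv \<in> Tset E W" "Zv e' = Zero" "\<forall>f. f \<notin> sep V1 V2 \<longrightarrow> Zv f = comp V1 V2 f"
      using TT_elim[OF A'(1) Z(1) s12] by blast
    have "\<forall>f. f \<notin> sep A B \<longrightarrow> lift Zero Zv f = comp A B f"
    proof (intro allI impI)
      fix f assume f: "f \<notin> sep A B"
      show "lift Zero Zv f = comp A B f"
      proof (cases f)
        case None then show ?thesis using A' Z by (simp add: comp_def)
      next
        case (Some h) then show ?thesis using f A' Z Zv(3) by (simp add: sep_lift_Some lift_comp)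
      qed
    qed
    then show ?thesis using OmC_Z[OF Zv(1)] Zv(2) e' by (intro bexI[of _ "lift Zero Zv"]) auto
  next
    case (P Y)
    then have False using ss A' by (metis None_supp sign.distinct(3) sign.distinct(5))
    then show ?thesis ..
  next
    case (N Y)
    then have False using ss A' by (metis None_supp sign.distinct(3) sign.distinct(5))
    then show ?thesis ..
  qed
next
  case (P X)
  note A' = P
  show ?thesis using B
  proof (cases rule: OmC_cases)
    case (Z V2)
    then have False using ss A' by (metis None_supp sign.distinct(3) sign.distinct(5))
    then show ?thesis ..
  next
    case (P Y)
    obtain e' where e': "e = Some e'" using e A' P by (cases e) (auto simp: sep_lift_None)
    then have "e' \<in> sep X Y" using e A' P by (simp add: sep_lift_Some)
    then obtain Zw where ZW: "Zw \<in> W" and Zw: "Zw \<in> I'e X Y e'" using A2'[OF A'(1) P(1)] by blast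
    have "\<forall>f. f \<notin> sep A B \<longrightarrow> lift Pos Zw f = comp A B f"
    proof (intro allI impI)
      fix f assume f: "f \<notin> sep A B"
      show "lift Pos Zw f = comp A B f"
      proof (cases f)
        case None then show ?thesis using A' P by (simp add: comp_def)
      next
        case (Some h) then show ?thesis using f A' P I'eD(2)[OF Zw] by (simp add: sep_lift_Some lift_comp)
      qed
    qed
    then show ?thesis using OmC_P[OF ZW] I'eD(1)[OF Zw] e' by (intro bexI[of _ "lift Pos Zw"]) auto
  next
    case (N Y)
    then show ?thesis using A' elim_PN e by simp
  qed
next
  case (N X)
  note A' = N
  show ?thesis using B
  proof (cases rule: OmC_cases)
    case (Z V2)
    then have False using ss A' by (metis None_supp sign.distinct(3) sign.distinct(5))
    then show ?thesis ..
  next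
    case (P Y)
    have "e \<in> sep B A" using e sep_sym by metis
    then have "\<exists>Z\<in>OmC. Z e = Zero \<and> (\<forall>f. f \<notin> sep B A \<longrightarrow> Z f = comp B A f)"
      using P A' elim_PN by simp
    then show ?thesis by (rule elim_swap)
  next
    case (N Y)
    obtain e' where e': "e = Some e'" using e A' N by (cases e) (auto simp: sep_lift_None)
    then have "e' \<in> sep (negv X) (negv Y)" using e A' N by (simp add: sep_lift_Some)
    then have "e' \<in> sep X Y" by (simp add: sep_neg)
    then obtain Zw where ZW: "Zw \<in> W" and Zw: "Zw \<in> I'e X Y e'" using A2'[OF A'(1) N(1)] by blast
    have "\<forall>f. f \<notin> sep A B \<longrightarrow> lift Neg (negv Zw) f = comp A B f"
    proof (intro allI impI)
      fix f assume f: "f \<notin> sep A B"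
      show "lift Neg (negv Zw) f = comp A B f"
      proof (cases f)
        case None then show ?thesis using A' N by (simp add: comp_def)
      next
        case (Some h)
        then have "h \<notin> sep X Y" using f A' N by (simp add: sep_lift_Some sep_neg)
        then have zh: "Zw h = comp X Y h" using I'eD(2)[OF Zw] by blast
        have "comp A B f = comp (negv X) (negv Y) h" using Some A' N by (simp add: lift_comp)
        also have "\<dots> = negv (comp X Y) h" by (rule negv_comp_pt)
        also have "\<dots> = negv Zw h" using zh by (simp add: negv_def)
        finally show ?thesis using Some by simp
      qed
    qed
    moreover have "lift Neg (negv Zw) e = Zero" using I'eD(1)[OF Zw] e' by simp
    ultimately show ?thesis using OmC_N[OF ZW] by (intro bexI[of _ "lift Neg (negv Zw)"]) auto
  qed
qed

lemma OmC_om: "oriented_matroid (Some ` E \<union> {None}) OmC"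
  unfolding oriented_matroid_def
proof (intro conjI ballI allI impI)
  show "OmC \<subseteq> sv_set (Some ` E \<union> {None})"
  proof
    fix A assume "A \<in> OmC"
    then show "A \<in> sv_set (Some ` E \<union> {None})"
    proof (cases rule: OmC_cases)
      case (Z V)
      then have "V \<in> sv_set E" unfolding Tset_def by blast
      then show ?thesis using Z by (auto simp: sv_set_def split: option.splits)
    next
      case (P X)
      have "X \<in> sv_set E" using P(1) by (rule W_sv)
      then show ?thesis using P by (auto simp: sv_set_def split: option.splits)
    next
      case (N X)
      have "X \<in> sv_set E" using N(1) by (rule W_sv)
      then show ?thesis using N by (auto simp: sv_set_def split: option.splits)
    qed
  qed
next
  have "zerov \<in> Tset E W" unfolding Tset_def
    by (auto simp: zerov_def sv_set_def comp_def negv_def)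
  moreover have "zerov = lift Zero (zerov :: 'e signvec)"
  proof fix x show "zerov x = lift Zero zerov x" by (cases x) (auto simp: zerov_def) qed
  ultimately show "zerov \<in> OmC" using OmC_Z by metis
next
  fix X assume "X \<in> OmC" then show "negv X \<in> OmC" by (rule OmC_neg)
next
  fix X Y assume "X \<in> OmC" "Y \<in> OmC" then show "comp X Y \<in> OmC" by (rule OmC_comp)
next
  fix X Y e assume X: "X \<in> OmC" and Y: "Y \<in> OmC" and h: "supp X = supp Y \<and> e \<in> sep X Y"
  then obtain Z where Z: "Z \<in> OmC" "Z e = Zero" "\<forall>f. f \<notin> sep X Y \<longrightarrow> Z f = comp X Y f"
    using OmC_elim by blast
  have "\<forall>f\<in>Some ` E \<union> {None}. f \<notin> sep X Y \<longrightarrow> Z f = comp X Y f \<and> Z f = comp Y X f"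
    using Z(3) comp_off_sep by metis
  then show "\<exists>Z\<in>OmC. Z e = Zero \<and> (\<forall>f\<in>Some ` E \<union> {None}. f \<notin> sep X Y \<longrightarrow> Z f = comp X Y f \<and> Z f = comp Y X f)"
    using Z(1,2) by blast
qed

lemma W_eq: "W = {(\<lambda>e. X (Some e)) | X. X \<in> OmC \<and> X None = Pos}"
proof
  show "W \<subseteq> {(\<lambda>e. X (Some e)) | X. X \<in> OmC \<and> X None = Pos}"
  proof
    fix X assume "X \<in> W"
    then have "lift Pos X \<in> OmC" by (rule OmC_P)
    moreover have "X = (\<lambda>e. lift Pos X (Some e))" by (rule ext) (simp only: lift_simps)
    moreover have "lift Pos X None = Pos" by (simp only: lift_simps)
    ultimately show "X \<in> {(\<lambda>e. X (Some e)) | X. X \<in> OmC \<and> X None = Pos}"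
      by blast
  qed
next
  show "{(\<lambda>e. X (Some e)) | X. X \<in> OmC \<and> X None = Pos} \<subseteq> W"
  proof
    fix Y assume "Y \<in> {(\<lambda>e. X (Some e)) | X. X \<in> OmC \<and> X None = Pos}"
    then obtain A where A: "A \<in> OmC" "A None = Pos" "Y = (\<lambda>e. A (Some e))" by blast
    from A(1) show "Y \<in> W"
    proof (cases rule: OmC_cases)
      case (Z V) then show ?thesis using A(2) by simp
    next
      case (P X) then show ?thesis using A(3) by simp
    next
      case (N X) then show ?thesis using A(2) by simp
    qed
  qed
qed

lemma rev_dir: "affine_om E W"
  unfolding affine_om_def using OmC_om W_eq by blast


end

theorem corollary5p2:
  fixes E :: "'e set" and W :: "'e signvec set"
  assumes "finite E" and "W \<subseteq> sv_set E"
  shows "affine_om E W \<longleftrightarrow>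
           ((\<forall>X\<in>W. \<forall>Y\<in>W. comp X (negv Y) \<in> W) \<and>
            (\<forall>X\<in>W. \<forall>Y\<in>W. sep X Y \<noteq> {} \<longrightarrow>
                (\<forall>e\<in>sep X Y. I'e X Y e \<inter> W \<noteq> {})) \<and>
            compset (Qset W) W \<subseteq> W)"
proof
  assume "affine_om E W"
  then obtain Om :: "'e option signvec set" where om: "oriented_matroid (Some ` E \<union> {None}) Om"
    and W: "W = {(\<lambda>e. X (Some e)) | X. X \<in> Om \<and> X None = Pos}"
    unfolding affine_om_def by blast
  show "(\<forall>X\<in>W. \<forall>Y\<in>W. comp X (negv Y) \<in> W) \<and>
            (\<forall>X\<in>W. \<forall>Y\<in>W. sep X Y \<noteq> {} \<longrightarrow>
                (\<forall>e\<in>sep X Y. I'e X Y e \<inter> W \<noteq> {})) \<and>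
            compset (Qset W) W \<subseteq> W"
    using fwd_A1[OF om W] fwd_A2[OF om W] fwd_A3[OF om W] by blast
next
  assume h: "(\<forall>X\<in>W. \<forall>Y\<in>W. comp X (negv Y) \<in> W) \<and>
            (\<forall>X\<in>W. \<forall>Y\<in>W. sep X Y \<noteq> {} \<longrightarrow>
                (\<forall>e\<in>sep X Y. I'e X Y e \<inter> W \<noteq> {})) \<and>
            compset (Qset W) W \<subseteq> W"
  have "rv E W"
    using assms(1) assms(2) conjunct1[OF h] conjunct1[OF conjunct2[OF h]] conjunct2[OF conjunct2[OF h]]
    by (rule rv.intro)
  then show "affine_om E W" by (rule rv.rev_dir)
qed

end
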